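(* Let $\alpha=1/4$, so each of the four user types $(x,e)\in\{1/4,3/4\}^2$ arrives with mass $1/4$ per period. Let $q_1^*,q_3^*\in(0,1)$ with $q_1^*\neq q_3^*$ be the status quo qualities of segments $x=1/4$ and $x=3/4$. Then there exist treatment qualities $q_1,q_3\in(0,1)$ such that (i) the experimental ARQ increases: $\frac{q_3}{1-q_3^*}+\frac{q_1}{1-q_1^*}>\frac{q_3^*}{1-q_3^*}+\frac{q_1^*}{1-q_1^*}$; (ii) the experimental churn rate decreases: $\dfrac{\frac{1-q_3}{1-q_3^*}+\frac{1-q_1}{1-q_1^*}}{2\left(\frac{4}{3(1-q_3^* )}+\frac{4}{3(1-q_1^* )}\right)}<\dfrac{1}{\frac{4}{3(1-q_3^* )}+\frac{4}{3(1-q_1^* )}}$; and (iii) the treatment's steady-state total user population is smaller: $\frac{4}{3(1-q_3)}+\frac{4}{3(1-q_1)}<\frac{4}{3(1-q_3^* )}+\frac{4}{3(1-q_1^* )}$.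
   Context: Model: a type-$(x,e)$ user churns each period with probability $(1-q(x))(1-e)$, where $q(x)\in(0,1)$ is the algorithm's recommendation quality for segment $x$; the steady-state mass of type $(x,e)$ is $F(x,e)/((1-q(x))(1-e))$, here with $F\equiv 1/4$. The experimental ARQ and churn rate of a treatment are computed by applying the treatment qualities $q_1=q(1/4)$, $q_3=q(3/4)$ for one period to the status quo's steady-state population (status quo qualities $q_1^*,q_3^*$); inequalities (i)–(iii) are these comparisons written out (in (i) both sides are the ARQ numerators over the common positive denominator $\frac{4}{3(1-q_3^* )}+\frac{4}{3(1-q_1^* )}$, after cancelling the factor $4/3$). *)

theory Defs
  imports Complex_Main
begin

end

theory Submission
  imports Defs
begin

lemma core:
  fixes u v :: real
  assumes u: "0 < u" "u < 1" and v: "0 < v" "v < 1" and ne: "u \<noteq> v"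
  shows "\<exists>x y. 0 < x \<and> x < 1 \<and> 0 < y \<and> y < 1 \<and> x / u + y / v < 2
              \<and> 1 / x + 1 / y < 1 / u + 1 / v"
proof -
  define s where "s = u + v"
  define p where "p = 3*u^2 + 10*u*v + 3*v^2"
  define l where "l = (5*u^2 + 22*u*v + 5*v^2) / (2*p)"
  define x where "x = l * (u*(u+3*v)) / (2*s)"
  define y where "y = l * (v*(v+3*u)) / (2*s)"
  have s: "s > 0" using u v s_def by simp
  have p: "p > 0" using u v p_def by (simp add: add_pos_pos)
  have sq: "(u - v)^2 > 0" using ne by simp
  have l0: "l > 0" unfolding l_def using p u v by (simp add: add_pos_pos)
  have l1: "l < 1" unfolding l_def using p sq by (simp add: field_simps p_def power2_eq_square algebra_simps)
  have a1: "u*(u+3*v) < 2*s"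
  proof -
    have "u*u < u" "u*v < u" "u*v < v" using u v by (simp_all add: mult_less_cancel_left1 mult_less_cancel_right1)
    then show ?thesis unfolding s_def by (simp add: algebra_simps)
  qed
  have a2: "v*(v+3*u) < 2*s"
  proof -
    have "v*v < v" "u*v < u" "u*v < v" using u v by (simp_all add: mult_less_cancel_left1 mult_less_cancel_right1)
    then show ?thesis unfolding s_def by (simp add: algebra_simps)
  qed
  have x0: "x > 0" unfolding x_def using l0 s u v by simp
  have y0: "y > 0" unfolding y_def using l0 s u v by simp
  have x1: "x < 1"
  proof -
    have "u*(u+3*v) / (2*s) < 1" using a1 s by simp
    moreover have "u*(u+3*v) / (2*s) > 0" using u v s by simp
    ultimately have "l * (u*(u+3*v) / (2*s)) < 1" using l0 l1
      using mult_strict_mono[of l 1 _ 1] by fastforce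
    then show ?thesis unfolding x_def by simp
  qed
  have y1: "y < 1"
  proof -
    have "v*(v+3*u) / (2*s) < 1" using a2 s by simp
    moreover have "v*(v+3*u) / (2*s) > 0" using u v s by simp
    ultimately have "l * (v*(v+3*u) / (2*s)) < 1" using l0 l1
      using mult_strict_mono[of l 1 _ 1] by fastforce
    then show ?thesis unfolding y_def by simp
  qed
  have arq: "x / u + y / v = 2 * l"
  proof -
    have "x / u = l * (u+3*v) / (2*s)" unfolding x_def using u by simp
    moreover have "y / v = l * (v+3*u) / (2*s)" unfolding y_def using v by simp
    moreover have "l * (u+3*v) / (2*s) + l * (v+3*u) / (2*s) = l * (4*s) / (2*s)"
      unfolding s_def by (simp add: add_divide_distrib[symmetric] algebra_simps)
    ultimately show ?thesis using s by simp
  qed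
  have pop: "1 / x + 1 / y = 4 * s * (u^2 + 6*u*v + v^2) / (u*v*(5*u^2 + 22*u*v + 5*v^2))"
  proof -
    define q where "q = 5*u^2 + 22*u*v + 5*v^2"
    have q: "q > 0" unfolding q_def using u v by (simp add: add_pos_pos)
    have pp: "p = (u+3*v)*(v+3*u)" unfolding p_def by (simp add: power2_eq_square algebra_simps)
    have e1: "1 / x = (2*s/l) * (1/(u*(u+3*v)))" unfolding x_def using l0 s u v by simp
    have e2: "1 / y = (2*s/l) * (1/(v*(v+3*u)))" unfolding y_def using l0 s u v by simp
    have e3: "1/(u*(u+3*v)) + 1/(v*(v+3*u)) = (u^2 + 6*u*v + v^2) / (u*v*p)"
    proof -
      have A: "u*(u+3*v) > 0" "v*(v+3*u) > 0" using u v by simp_all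
      have "1/(u*(u+3*v)) + 1/(v*(v+3*u)) = (v*(v+3*u) + u*(u+3*v)) / ((u*(u+3*v))*(v*(v+3*u)))"
      proof -
        have g: "\<And>a b::real. a > 0 \<Longrightarrow> b > 0 \<Longrightarrow> 1/a + 1/b = (b + a)/(a*b)"
          by (simp add: field_simps)
        show ?thesis using g[OF A] .
      qed
      also have "v*(v+3*u) + u*(u+3*v) = u^2 + 6*u*v + v^2" by (simp add: power2_eq_square algebra_simps)
      also have "(u*(u+3*v))*(v*(v+3*u)) = u*v*p" unfolding pp by (simp add: algebra_simps)
      finally show ?thesis .
    qed
    have e4: "2*s/l = 4*s*p/q" unfolding l_def q_def[symmetric] using p q by (simp add: field_simps)
    have "1 / x + 1 / y = (4*s*p/q) * ((u^2 + 6*u*v + v^2) / (u*v*p))"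
    proof -
      have "1 / x + 1 / y = (2*s/l) * (1/(u*(u+3*v)) + 1/(v*(v+3*u)))"
        unfolding e1 e2 by (rule distrib_left[symmetric])
      then show ?thesis unfolding e3 e4 .
    qed
    also have "... = 4 * s * (u^2 + 6*u*v + v^2) / (u*v*q)" using p q u v by (simp add: field_simps)
    finally show ?thesis unfolding q_def .
  qed
  have rhs: "1 / u + 1 / v = s / (u*v)" using u v by (simp add: field_simps s_def)
  have key: "4 * s * (u^2 + 6*u*v + v^2) / (u*v*(5*u^2 + 22*u*v + 5*v^2)) < s / (u*v)"
  proof -
    have q: "5*u^2 + 22*u*v + 5*v^2 > 0" using u v by (simp add: add_pos_pos)
    have "4 * (u^2 + 6*u*v + v^2) < 5*u^2 + 22*u*v + 5*v^2" using sq by (simp add: power2_eq_square algebra_simps)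
    then have "4 * s * (u^2 + 6*u*v + v^2) < s * (5*u^2 + 22*u*v + 5*v^2)" using s by simp
    then have "4 * s * (u^2 + 6*u*v + v^2) / (5*u^2 + 22*u*v + 5*v^2) < s"
      using q by (simp add: pos_divide_less_eq)
    then have "(4 * s * (u^2 + 6*u*v + v^2) / (5*u^2 + 22*u*v + 5*v^2)) / (u*v) < s / (u*v)"
      using u v by (intro divide_strict_right_mono) simp_all
    then show ?thesis by (simp add: divide_divide_eq_left mult.commute mult.assoc)
  qed
  show ?thesis
    apply (rule exI[of _ x], rule exI[of _ y])
    using x0 x1 y0 y1 arq l1 pop rhs key by simp
qed

theorem corollary2:
  fixes q1s q3s :: real
  assumes "0 < q1s" "q1s < 1" "0 < q3s" "q3s < 1" "q1s \<noteq> q3s"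
  shows "\<exists>q1 q3 :: real. 0 < q1 \<and> q1 < 1 \<and> 0 < q3 \<and> q3 < 1 \<and>
     q3 / (1 - q3s) + q1 / (1 - q1s) > q3s / (1 - q3s) + q1s / (1 - q1s) \<and>
     ((1 - q3) / (1 - q3s) + (1 - q1) / (1 - q1s))
        / (2 * (4 / (3 * (1 - q3s)) + 4 / (3 * (1 - q1s))))
       < 1 / (4 / (3 * (1 - q3s)) + 4 / (3 * (1 - q1s))) \<and>
     4 / (3 * (1 - q3)) + 4 / (3 * (1 - q1)) < 4 / (3 * (1 - q3s)) + 4 / (3 * (1 - q1s))"
proof -
  define u where "u = 1 - q3s"
  define v where "v = 1 - q1s"
  have u: "0 < u" "u < 1" and v: "0 < v" "v < 1" and ne: "u \<noteq> v"
    using assms u_def v_def by auto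
  obtain x y where xy: "0 < x" "x < 1" "0 < y" "y < 1" and A: "x / u + y / v < 2"
    and P: "1 / x + 1 / y < 1 / u + 1 / v" using core[OF u v ne] by blast
  have D: "4 / (3 * u) + 4 / (3 * v) > 0" using u v by (simp add: add_pos_pos)
  have i: "(1 - x) / u + (1 - y) / v > (1 - u) / u + (1 - v) / v"
  proof -
    have "(1 - x) / u + (1 - y) / v = 1/u + 1/v - (x/u + y/v)" by (simp add: diff_divide_distrib)
    moreover have "(1 - u) / u + (1 - v) / v = 1/u + 1/v - 2" using u v by (simp add: diff_divide_distrib)
    ultimately show ?thesis using A by simp
  qed
  have ii: "(x / u + y / v) / (2 * (4 / (3 * u) + 4 / (3 * v))) < 1 / (4 / (3 * u) + 4 / (3 * v))"
    using A D by (simp add: divide_simps)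
  have iii: "4 / (3 * x) + 4 / (3 * y) < 4 / (3 * u) + 4 / (3 * v)"
  proof -
    have "4 / (3 * x) + 4 / (3 * y) = (4/3) * (1/x + 1/y)" by simp
    moreover have "4 / (3 * u) + 4 / (3 * v) = (4/3) * (1/u + 1/v)" by simp
    ultimately show ?thesis using P by simp
  qed
  show ?thesis
    apply (rule exI[of _ "1 - y"], rule exI[of _ "1 - x"])
    using xy i ii iii u_def v_def by simp
qed

end
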